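(* Let $X\in\mathbb R^{m\times N}$ have rank $m<N$ with singular values $\sigma_1\ge\cdots\ge\sigma_m>0$, and let $w\in\mathbb R^N$ have i.i.d. $\mathcal N(0,1)$ entries. Let $p\in\mathbb N$, $p\ge2$, $\epsilon\in(0,1)$, and $\widetilde X=X+E\in\mathbb R^{m\times N}$ with $\|E\|_2\le\epsilon\sigma_1<\sigma_m$. Then with probability at least $1-2/N^{p-1}$, every minimizer $\widetilde w$ of $\|z\|_\infty$ subject to $\widetilde Xz=Xw$ satisfies $$\|\widetilde w\|_\infty\le\frac{\sigma_1}{\sigma_m-\epsilon\sigma_1}\sqrt{2p\log N}.$$
   Context: $\|\cdot\|_2$ of a matrix is the spectral norm. *)

theory Defs
  imports "HOL-Analysis.Analysis" "HOL-Probability.Probability"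
begin

definition spec_norm :: "real^'n^'m \<Rightarrow> real" where
  "spec_norm A = onorm (\<lambda>x. A *v x)"

definition gram_eigenvalues :: "real^'n^'m \<Rightarrow> real set" where
  "gram_eigenvalues X = {c. \<exists>v::real^'m. v \<noteq> 0 \<and> (X ** transpose X) *v v = c *\<^sub>R v}"

text \<open>For X with m \<le> N rows, the singular values of X are the square roots of the
  eigenvalues of X X^T. Largest singular value sigma_1 and smallest sigma_m:\<close>
definition sigma_max :: "real^'n^'m \<Rightarrow> real" where
  "sigma_max X = sqrt (Max (gram_eigenvalues X))"

definition sigma_min :: "real^'n^'m \<Rightarrow> real" where
  "sigma_min X = sqrt (Min (gram_eigenvalues X))"

definition linf_norm :: "real^'n \<Rightarrow> real" where
  "linf_norm z = Max (range (\<lambda>i. \<bar>z $ i\<bar>))"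

definition gauss_vec :: "('n::finite \<Rightarrow> real) measure" where
  "gauss_vec = PiM UNIV (\<lambda>_. density lborel std_normal_density)"

end

theory Submission
  imports Defs
begin


abbreviation "G1 \<equiv> density lborel std_normal_density"

lemma ps1: "prob_space G1" using prob_space_normal_density[of 1 0] by simp

lemma ps: "prob_space (gauss_vec :: ('n::finite \<Rightarrow> real) measure)"
  unfolding gauss_vec_def by (intro prob_space_PiM ps1)

lemma mgf1: "(\<integral>\<^sup>+x. ennreal (exp (c * x)) \<partial>G1) = ennreal (exp (c^2/2))"
proof -
  have eq: "std_normal_density x * exp (c*x) = exp (c^2/2) * normal_density c 1 x" for x
    unfolding normal_density_def by (simp add: mult_exp_exp power2_eq_square field_simps)
  have "(\<integral>\<^sup>+x. ennreal (exp (c * x)) \<partial>G1) = (\<integral>\<^sup>+x. ennreal (std_normal_density x) * ennreal (exp (c * x)) \<partial>lborel)"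
    by (subst nn_integral_density) auto
  also have "\<dots> = (\<integral>\<^sup>+x. ennreal (exp (c^2/2)) * ennreal (normal_density c 1 x) \<partial>lborel)"
    by (intro nn_integral_cong) (simp add: ennreal_mult'[symmetric] eq normal_density_nonneg)
  also have "\<dots> = ennreal (exp (c^2/2)) * (\<integral>\<^sup>+x. ennreal (normal_density c 1 x) \<partial>lborel)"
    by (rule nn_integral_cmult) auto
  also have "(\<integral>\<^sup>+x. ennreal (normal_density c 1 x) \<partial>lborel) = 1"
  proof -
    interpret prob_space "density lborel (normal_density c 1)" using prob_space_normal_density[of 1 c] by simp
    show ?thesis using emeasure_space_1 by (simp add: emeasure_density)
  qed
  finally show ?thesis by simp
qed

lemma psf: "product_sigma_finite (\<lambda>_::'n. G1)"
proof -
  interpret prob_space G1 by (rule ps1)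
  show ?thesis unfolding product_sigma_finite_def by (simp add: sigma_finite_measure_axioms)
qed

lemma mgf_vec:
  fixes a :: "'n::finite \<Rightarrow> real"
  shows "(\<integral>\<^sup>+w. ennreal (exp (\<Sum>j\<in>UNIV. c * a j * w j)) \<partial>(gauss_vec::('n \<Rightarrow> real) measure))
     = ennreal (exp (c^2 * (\<Sum>j\<in>UNIV. (a j)^2) / 2))"
proof -
  interpret product_sigma_finite "\<lambda>_::'n. G1" by (rule psf)
  have "(\<integral>\<^sup>+w. ennreal (exp (\<Sum>j\<in>UNIV. c * a j * w j)) \<partial>(gauss_vec::('n \<Rightarrow> real) measure))
     = (\<integral>\<^sup>+w. (\<Prod>j\<in>UNIV. ennreal (exp (c * a j * w j))) \<partial>(PiM UNIV (\<lambda>_::'n. G1)))"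
    unfolding gauss_vec_def
    by (intro nn_integral_cong) (simp add: exp_sum prod_ennreal)
  also have "\<dots> = (\<Prod>j\<in>UNIV. (\<integral>\<^sup>+x. ennreal (exp ((c * a j) * x)) \<partial>G1))"
    by (rule product_nn_integral_prod) auto
  also have "\<dots> = (\<Prod>j\<in>UNIV. ennreal (exp ((c * a j)^2/2)))"
    by (simp add: mgf1)
  also have "\<dots> = ennreal (exp (c^2 * (\<Sum>j\<in>UNIV. (a j)^2) / 2))"
    by (simp add: prod_ennreal exp_sum[symmetric] sum_divide_distrib sum_distrib_left power_mult_distrib)
  finally show ?thesis .
qed


lemma space_gv: "space (gauss_vec::('n::finite \<Rightarrow> real) measure) = UNIV"
  unfolding gauss_vec_def by (simp add: space_PiM)

lemma meas_lin[measurable]: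
  fixes a :: "'n::finite \<Rightarrow> real"
  shows "(\<lambda>w. \<Sum>j\<in>UNIV. a j * w j) \<in> borel_measurable (gauss_vec::('n \<Rightarrow> real) measure)"
  unfolding gauss_vec_def by measurable

lemma chernoff:
  fixes a :: "'n::finite \<Rightarrow> real"
  assumes "(\<Sum>j\<in>UNIV. (a j)^2) \<le> K^2" "0 \<le> K" "0 \<le> t"
  shows "emeasure (gauss_vec::('n \<Rightarrow> real) measure) {w. (\<Sum>j\<in>UNIV. a j * w j) > K*t} \<le> ennreal (exp (- (t^2) / 2))"
proof -
  define r where "r = sqrt (\<Sum>j\<in>UNIV. (a j)^2)"
  have r0: "0 \<le> r" unfolding r_def by (simp add: sum_nonneg)
  have rK: "r \<le> K" unfolding r_def using assms real_sqrt_le_mono[OF assms(1)] by simp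
  have r2: "r^2 = (\<Sum>j\<in>UNIV. (a j)^2)" unfolding r_def by (simp add: sum_nonneg)
  show ?thesis
  proof (cases "r = 0")
    case True
    then have "\<And>j. a j = 0" using r2 by (simp add: sum_nonneg_eq_0_iff)
    then have "{w. (\<Sum>j\<in>UNIV. a j * w j) > K*t} = {}" using assms by (auto simp: not_less)
    then show ?thesis by simp
  next
    case False
    with r0 have rp: "r > 0" by simp
    define c where "c = t / r"
    have c0: "0 \<le> c" unfolding c_def using rp assms by simp
    let ?S = "{w. (\<Sum>j\<in>UNIV. a j * w j) > K*t}"
    have Ssets: "?S \<in> sets (gauss_vec::('n \<Rightarrow> real) measure)"
    proof -
      have "?S = {w \<in> space (gauss_vec::('n \<Rightarrow> real) measure). (\<Sum>j\<in>UNIV. a j * w j) > K*t}"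
        by (simp add: space_gv)
      also have "\<dots> \<in> sets gauss_vec" by measurable
      finally show ?thesis .
    qed
    have ind: "indicator ?S w \<le> ennreal (exp ((\<Sum>j\<in>UNIV. c * a j * w j) - t^2))" for w
    proof (cases "w \<in> ?S")
      case True
      then have "K*t < (\<Sum>j\<in>UNIV. a j * w j)" by simp
      moreover have "r * t \<le> K * t" using rK assms by (simp add: mult_right_mono)
      ultimately have "c * (r*t) \<le> c * (\<Sum>j\<in>UNIV. a j * w j)" using c0 by (intro mult_left_mono) auto
      moreover have "c * (r*t) = t^2" unfolding c_def using rp by (simp add: power2_eq_square)
      moreover have "c * (\<Sum>j\<in>UNIV. a j * w j) = (\<Sum>j\<in>UNIV. c * a j * w j)"
        by (simp add: sum_distrib_left mult.assoc)
      ultimately have "0 \<le> (\<Sum>j\<in>UNIV. c * a j * w j) - t^2" by linarith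
      then show ?thesis using True by (simp add: indicator_def)
    qed (simp add: indicator_def)
    have "emeasure (gauss_vec::('n \<Rightarrow> real) measure) ?S = (\<integral>\<^sup>+w. indicator ?S w \<partial>gauss_vec)"
      using Ssets by simp
    also have "\<dots> \<le> (\<integral>\<^sup>+w. ennreal (exp (- (t^2))) * ennreal (exp (\<Sum>j\<in>UNIV. c * a j * w j)) \<partial>gauss_vec)"
      proof (intro nn_integral_mono)
      fix w
      have "ennreal (exp ((\<Sum>j\<in>UNIV. c * a j * w j) - t^2)) = ennreal (exp (- (t^2))) * ennreal (exp (\<Sum>j\<in>UNIV. c * a j * w j))"
        by (simp add: ennreal_mult'[symmetric] mult_exp_exp)
      then show "indicator ?S w \<le> ennreal (exp (- (t^2))) * ennreal (exp (\<Sum>j\<in>UNIV. c * a j * w j))"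
        using ind[of w] by simp
    qed
    also have "\<dots> = ennreal (exp (- (t^2))) * (\<integral>\<^sup>+w. ennreal (exp (\<Sum>j\<in>UNIV. c * a j * w j)) \<partial>gauss_vec)"
      by (rule nn_integral_cmult) measurable
    also have "\<dots> = ennreal (exp (- (t^2))) * ennreal (exp (c^2 * (\<Sum>j\<in>UNIV. (a j)^2) / 2))"
      by (simp add: mgf_vec)
    also have "c^2 * (\<Sum>j\<in>UNIV. (a j)^2) = t^2"
      unfolding c_def r2[symmetric] using rp by (simp add: power_divide)
    also have "ennreal (exp (- (t^2))) * ennreal (exp (t^2 / 2)) = ennreal (exp (- (t^2) / 2))"
      by (simp add: ennreal_mult'[symmetric] mult_exp_exp)
    finally show ?thesis .
  qed
qed



lemma adj: fixes A :: "real^'n^'m"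
  shows "(A *v x) \<bullet> y = x \<bullet> (transpose A *v y)"
proof -
  have "(A *v x) \<bullet> y = (\<Sum>i\<in>UNIV. \<Sum>j\<in>UNIV. A$i$j * x$j * y$i)"
    unfolding inner_vec_def matrix_vector_mult_def by (simp add: sum_distrib_right)
  also have "\<dots> = (\<Sum>j\<in>UNIV. \<Sum>i\<in>UNIV. A$i$j * x$j * y$i)" by (rule sum.swap)
  also have "\<dots> = x \<bullet> (transpose A *v y)"
    unfolding inner_vec_def matrix_vector_mult_def transpose_def by (simp add: sum_distrib_left mult_ac)
  finally show ?thesis .
qed

lemma transpose_plus: "transpose (A + B) = transpose A + transpose (B::real^'n^'m)"
  by (simp add: transpose_def vec_eq_iff)

lemma qlem: fixes b C :: real
  assumes "b \<ge> 0" "\<And>u. u > 0 \<Longrightarrow> 2*u*b + u^2*C \<le> 0" shows "b = 0"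
proof (rule ccontr)
  assume "b \<noteq> 0" with assms have bp: "b > 0" by simp
  define u where "u = b / (\<bar>C\<bar> + 1)"
  have up: "u > 0" unfolding u_def using bp by simp
  have "u * \<bar>C\<bar> < b" unfolding u_def using bp
    by (simp add: field_simps)
  then have "u * (u*\<bar>C\<bar>) < u * b" using up by simp
  moreover have "- (u^2*\<bar>C\<bar>) \<le> u^2*C"
  proof -
    have "0 \<le> C + \<bar>C\<bar>" by linarith
    then have "0 \<le> u^2 * (C + \<bar>C\<bar>)" by simp
    then show ?thesis by (simp add: algebra_simps)
  qed
  moreover have "u*b > 0" using up bp by simp
  ultimately have "2*u*b + u^2*C > 0" unfolding power2_eq_square by (simp only: mult.assoc)
  with assms(2)[OF up] show False by simp
qed

lemma expand:
  fixes X :: "real^'n^'m"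
  shows "(transpose X *v (v + t *\<^sub>R y)) \<bullet> (transpose X *v (v + t *\<^sub>R y)) - l * ((v + t *\<^sub>R y) \<bullet> (v + t *\<^sub>R y))
    = ((transpose X *v v) \<bullet> (transpose X *v v) - l * (v \<bullet> v))
      + 2 * t * ((X *v (transpose X *v v) - l *\<^sub>R v) \<bullet> y)
      + t^2 * ((transpose X *v y) \<bullet> (transpose X *v y) - l * (y \<bullet> y))"
proof -
  have h1: "(transpose X *v v) \<bullet> (transpose X *v y) = (X *v (transpose X *v v)) \<bullet> y"
    by (simp only: adj)
  have h2: "(transpose X *v y) \<bullet> (transpose X *v v) = (X *v (transpose X *v v)) \<bullet> y"
    by (metis h1 inner_commute)
  show ?thesis
    by (simp del: transpose_matrix_vector add: h1 h2 matrix_vector_right_distrib matrix_vector_mult_scaleR inner_add_left inner_add_right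
        inner_diff_left inner_commute[of y v] power2_eq_square algebra_simps)
qed

lemma eig_max:
  fixes X :: "real^'n^'m"
  assumes "\<And>x. (transpose X *v x) \<bullet> (transpose X *v x) \<le> l * (x \<bullet> x)"
    and "(transpose X *v v) \<bullet> (transpose X *v v) = l * (v \<bullet> v)"
  shows "X *v (transpose X *v v) = l *\<^sub>R v"
proof -
  define y where "y = X *v (transpose X *v v) - l *\<^sub>R v"
  have "y \<bullet> y = 0"
  proof (rule qlem)
    fix u :: real assume "u > 0"
    from assms(1)[of "v + u *\<^sub>R y"] have "(transpose X *v (v + u *\<^sub>R y)) \<bullet> (transpose X *v (v + u *\<^sub>R y)) - l * ((v + u *\<^sub>R y) \<bullet> (v + u *\<^sub>R y)) \<le> 0" by simp
    then show "2*u*(y \<bullet> y) + u^2*((transpose X *v y) \<bullet> (transpose X *v y) - l * (y \<bullet> y)) \<le> 0"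
      unfolding expand using assms(2) by (simp add: y_def)
  qed simp
  then show ?thesis unfolding y_def by simp
qed

lemma eig_min:
  fixes X :: "real^'n^'m"
  assumes "\<And>x. (transpose X *v x) \<bullet> (transpose X *v x) \<ge> l * (x \<bullet> x)"
    and "(transpose X *v v) \<bullet> (transpose X *v v) = l * (v \<bullet> v)"
  shows "X *v (transpose X *v v) = l *\<^sub>R v"
proof -
  define y where "y = X *v (transpose X *v v) - l *\<^sub>R v"
  have "y \<bullet> y = 0"
  proof (rule qlem)
    fix u :: real assume "u > 0"
    from assms(1)[of "v + (-u) *\<^sub>R y"] have "(transpose X *v (v + (-u) *\<^sub>R y)) \<bullet> (transpose X *v (v + (-u) *\<^sub>R y)) - l * ((v + (-u) *\<^sub>R y) \<bullet> (v + (-u) *\<^sub>R y)) \<ge> 0" by simp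
    then have "2*(-u)*(y \<bullet> y) + (-u)^2*((transpose X *v y) \<bullet> (transpose X *v y) - l * (y \<bullet> y)) \<ge> 0"
      unfolding expand using assms(2) by (simp add: y_def)
    then show "2*u*(y \<bullet> y) + u^2*(- ((transpose X *v y) \<bullet> (transpose X *v y) - l * (y \<bullet> y))) \<le> 0"
      by (simp add: algebra_simps)
  qed simp
  then show ?thesis unfolding y_def by simp
qed


lemma q_eig:
  fixes X :: "real^'n^'m"
  assumes "(X ** transpose X) *v v = c *\<^sub>R v"
  shows "c * (v \<bullet> v) = (transpose X *v v) \<bullet> (transpose X *v v)"
proof -
  have "c * (v \<bullet> v) = ((X ** transpose X) *v v) \<bullet> v" using assms by simp
  also have "\<dots> = (X *v (transpose X *v v)) \<bullet> v" by (simp only: matrix_vector_mul_assoc)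
  also have "\<dots> = (transpose X *v v) \<bullet> (transpose X *v v)" by (simp only: adj)
  finally show ?thesis .
qed

lemma spectral:
  fixes X :: "real^'n^'m"
  shows "finite (gram_eigenvalues X)"
    and "\<And>x. (transpose X *v x) \<bullet> (transpose X *v x) \<le> Max (gram_eigenvalues X) * (x \<bullet> x)"
    and "\<And>x. Min (gram_eigenvalues X) * (x \<bullet> x) \<le> (transpose X *v x) \<bullet> (transpose X *v x)"
    and "0 \<le> Min (gram_eigenvalues X)"
    and "Min (gram_eigenvalues X) \<le> Max (gram_eigenvalues X)"
proof -
  define T where "T = transpose X"
  define q where "q x = (T *v x) \<bullet> (T *v x)" for x
  let ?S = "sphere (0::real^'m) 1"
  have cont: "continuous_on ?S q" unfolding q_def
    by (intro continuous_intros linear_continuous_on matrix_vector_mul_bounded_linear)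
  have ne: "?S \<noteq> {}"
  proof -
    have "norm (axis (undefined::'m) (1::real)) = 1" by simp
    then show ?thesis by auto
  qed
  obtain vM where vM: "vM \<in> ?S" "\<And>y. y \<in> ?S \<Longrightarrow> q y \<le> q vM"
    using continuous_attains_sup[OF compact_sphere ne cont] by blast
  obtain vm where vm: "vm \<in> ?S" "\<And>y. y \<in> ?S \<Longrightarrow> q vm \<le> q y"
    using continuous_attains_inf[OF compact_sphere ne cont] by blast
  have qscale: "q (c *\<^sub>R x) = c^2 * q x" for c x
    unfolding q_def by (simp add: matrix_vector_mult_scaleR power2_eq_square)
  have split: "\<exists>y \<in> ?S. x = norm x *\<^sub>R y" if "x \<noteq> 0" for x :: "real^'m"
    using that by (intro bexI[of _ "(1/norm x) *\<^sub>R x"]) auto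
  have xx: "x \<bullet> x = (norm x)^2" for x :: "real^'m" by (simp add: power2_norm_eq_inner)
  have upper: "q x \<le> q vM * (x \<bullet> x)" for x
  proof (cases "x = 0")
    case True then show ?thesis by (simp add: q_def)
  next
    case False
    then obtain y where y: "y \<in> ?S" "x = norm x *\<^sub>R y" using split by blast
    have "q x = (norm x)^2 * q y" by (subst y(2)) (simp add: qscale)
    also have "\<dots> \<le> (norm x)^2 * q vM" using vM(2)[OF y(1)] by (simp add: mult_left_mono)
    finally show ?thesis by (simp add: xx mult.commute)
  qed
  have lower: "q vm * (x \<bullet> x) \<le> q x" for x
  proof (cases "x = 0")
    case True then show ?thesis by (simp add: q_def)
  next
    case False
    then obtain y where y: "y \<in> ?S" "x = norm x *\<^sub>R y" using split by blast
    have "q x = (norm x)^2 * q y" by (subst y(2)) (simp add: qscale)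
    moreover have "(norm x)^2 * q vm \<le> (norm x)^2 * q y" using vm(2)[OF y(1)] by (simp add: mult_left_mono)
    ultimately show ?thesis by (simp add: xx mult.commute)
  qed
  have vMv: "vM \<bullet> vM = 1" "vm \<bullet> vm = 1" using vM(1) vm(1) by (simp_all add: xx)
  have eM: "(X ** T) *v vM = q vM *\<^sub>R vM"
    unfolding matrix_vector_mul_assoc[symmetric] T_def
    by (rule eig_max) (use upper vMv in \<open>auto simp: q_def T_def\<close>)
  have em: "(X ** T) *v vm = q vm *\<^sub>R vm"
    unfolding matrix_vector_mul_assoc[symmetric] T_def
    by (rule eig_min) (use lower vMv in \<open>auto simp: q_def T_def\<close>)
  have vM0: "vM \<noteq> 0" and vm0: "vm \<noteq> 0" using vMv by auto
  have inM: "q vM \<in> gram_eigenvalues X" unfolding gram_eigenvalues_def using eM vM0 T_def by auto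
  have inm: "q vm \<in> gram_eigenvalues X" unfolding gram_eigenvalues_def using em vm0 T_def by auto
  have bounds: "q vm \<le> c \<and> c \<le> q vM" if cin: "c \<in> gram_eigenvalues X" for c
  proof -
    obtain v where v: "v \<noteq> 0" "(X ** T) *v v = c *\<^sub>R v" using cin unfolding gram_eigenvalues_def T_def by auto
    have cq: "c * (v \<bullet> v) = q v" using q_eig[OF v(2)[unfolded T_def]] unfolding q_def T_def .
    have vp: "v \<bullet> v > 0" using v(1) by simp
    have "q vm * (v \<bullet> v) \<le> c * (v \<bullet> v)" "c * (v \<bullet> v) \<le> q vM * (v \<bullet> v)"
      using lower[of v] upper[of v] cq by auto
    then show ?thesis using vp by (simp add: mult_le_cancel_right)
  qed
  show fin: "finite (gram_eigenvalues X)"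
  proof -
    define G where "G = gram_eigenvalues X"
    define ev where "ev c = (SOME v. v \<noteq> 0 \<and> (X ** T) *v v = c *\<^sub>R v)" for c
    have evp: "ev c \<noteq> 0 \<and> (X ** T) *v ev c = c *\<^sub>R ev c" if "c \<in> G" for c
      unfolding ev_def by (rule someI_ex) (use that in \<open>auto simp: G_def gram_eigenvalues_def T_def\<close>)
    have orth: "ev c \<bullet> ev d = 0" if "c \<in> G" "d \<in> G" "c \<noteq> d" for c d
    proof -
      have "c * (ev c \<bullet> ev d) = ((X ** T) *v ev c) \<bullet> ev d" using evp[OF that(1)] by simp
      also have "\<dots> = (T *v ev c) \<bullet> (T *v ev d)" by (simp only: matrix_vector_mul_assoc[symmetric] adj T_def)
      also have "\<dots> = (T *v ev d) \<bullet> (T *v ev c)" by (rule inner_commute)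
      also have "\<dots> = ((X ** T) *v ev d) \<bullet> ev c" by (simp only: matrix_vector_mul_assoc[symmetric] adj T_def)
      also have "\<dots> = d * (ev c \<bullet> ev d)" using evp[OF that(2)] by (simp add: inner_commute)
      finally show ?thesis using that(3) by simp
    qed
    have inj: "inj_on ev G"
    proof (rule inj_onI)
      fix c d assume cd: "c \<in> G" "d \<in> G" "ev c = ev d"
      show "c = d"
      proof (rule ccontr)
        assume "c \<noteq> d"
        then have "ev c \<bullet> ev c = 0" using orth[OF cd(1,2)] cd(3) by simp
        then show False using evp[OF cd(1)] by simp
      qed
    qed
    have "pairwise orthogonal (ev ` G)"
      unfolding pairwise_def orthogonal_def using orth by auto
    moreover have "0 \<notin> ev ` G" using evp by auto
    ultimately have "independent (ev ` G)" by (rule pairwise_orthogonal_independent)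
    then have "finite (ev ` G)" using independent_bound by blast
    then show ?thesis using finite_imageD[OF _ inj] G_def by simp
  qed
  have MaxE: "Max (gram_eigenvalues X) = q vM"
    by (rule Max_eqI[OF fin]) (use bounds inM in auto)
  have MinE: "Min (gram_eigenvalues X) = q vm"
    by (rule Min_eqI[OF fin]) (use bounds inm in auto)
  show "\<And>x. (transpose X *v x) \<bullet> (transpose X *v x) \<le> Max (gram_eigenvalues X) * (x \<bullet> x)"
    using upper unfolding MaxE q_def T_def .
  show "\<And>x. Min (gram_eigenvalues X) * (x \<bullet> x) \<le> (transpose X *v x) \<bullet> (transpose X *v x)"
    using lower unfolding MinE q_def T_def .
  show "0 \<le> Min (gram_eigenvalues X)" unfolding MinE q_def by simp
  show "Min (gram_eigenvalues X) \<le> Max (gram_eigenvalues X)" using bounds[OF inm] MinE MaxE by simp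
qed


lemma sq_le: fixes a c :: real assumes "0 \<le> c" "a^2 \<le> c * a" "0 \<le> a" shows "a \<le> c"
proof (cases "a = 0")
  case False then have "a > 0" using assms by simp
  then show ?thesis using assms(2) by (simp add: power2_eq_square mult_le_cancel_right)
qed (use assms in simp)

lemma sqrt_bound: fixes a l n :: real
  assumes "a^2 \<le> l * n^2" "0 \<le> a" "0 \<le> n" "0 \<le> l"
  shows "a \<le> sqrt l * n"
proof -
  have "sqrt (a^2) \<le> sqrt (l * n^2)" using assms(1) by (rule real_sqrt_le_mono)
  then show ?thesis using assms by (simp add: real_sqrt_mult)
qed

lemma sqrt_bound2: fixes a l n :: real
  assumes "l * n^2 \<le> a^2" "0 \<le> a" "0 \<le> n" "0 \<le> l"
  shows "sqrt l * n \<le> a"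
proof -
  have "sqrt (l * n^2) \<le> sqrt (a^2)" using assms(1) by (rule real_sqrt_le_mono)
  then show ?thesis using assms by (simp add: real_sqrt_mult)
qed

lemma normT_upper: fixes X :: "real^'n^'m"
  shows "norm (transpose X *v v) \<le> sigma_max X * norm v"
  unfolding sigma_max_def
  using spectral(2)[of X v] spectral(4,5)[of X]
  by (intro sqrt_bound) (auto simp: power2_norm_eq_inner)

lemma normT_lower: fixes X :: "real^'n^'m"
  shows "sigma_min X * norm v \<le> norm (transpose X *v v)"
  unfolding sigma_min_def
  using spectral(3)[of X v] spectral(4)[of X]
  by (intro sqrt_bound2) (auto simp: power2_norm_eq_inner)

lemma sigma_max_nonneg: "0 \<le> sigma_max X" unfolding sigma_max_def
  using spectral(4,5)[of X] by simp

lemma normX: fixes X :: "real^'n^'m"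
  shows "norm (X *v w) \<le> sigma_max X * norm w"
proof (rule sq_le)
  show "0 \<le> sigma_max X * norm w" using sigma_max_nonneg[of X] by simp
  have "(norm (X *v w))^2 = w \<bullet> (transpose X *v (X *v w))"
    by (simp only: power2_norm_eq_inner adj[symmetric] inner_commute)
  also have "\<dots> \<le> norm w * norm (transpose X *v (X *v w))" by (rule norm_cauchy_schwarz)
  also have "\<dots> \<le> norm w * (sigma_max X * norm (X *v w))" by (intro mult_left_mono normT_upper) simp
  finally show "(norm (X *v w))^2 \<le> sigma_max X * norm w * norm (X *v w)" by (simp add: mult_ac)
qed simp

lemma normE: fixes E :: "real^'n^'m"
  shows "norm (transpose E *v v) \<le> spec_norm E * norm v"
proof (rule sq_le)
  have bl: "bounded_linear (\<lambda>x. E *v x)" by simp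
  show "0 \<le> spec_norm E * norm v" unfolding spec_norm_def using onorm_pos_le[OF bl] by simp
  have "(norm (transpose E *v v))^2 = (E *v (transpose E *v v)) \<bullet> v"
    by (simp only: power2_norm_eq_inner adj)
  also have "\<dots> \<le> norm (E *v (transpose E *v v)) * norm v" by (rule norm_cauchy_schwarz)
  also have "\<dots> \<le> (spec_norm E * norm (transpose E *v v)) * norm v"
    unfolding spec_norm_def by (intro mult_right_mono onorm[OF bl]) simp
  finally show "(norm (transpose E *v v))^2 \<le> spec_norm E * norm v * norm (transpose E *v v)" by (simp add: mult_ac)
qed simp

lemma construct:
  fixes X E :: "real^'n^'m" and e :: real
  assumes hE: "spec_norm E \<le> e * sigma_max X" and hs: "e * sigma_max X < sigma_min X"
  shows "\<exists>M :: real^'n^'n. (\<forall>w. (X + E) *v (M *v w) = X *v w) \<and>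
           (\<forall>w. norm (M *v w) \<le> sigma_max X / (sigma_min X - e * sigma_max X) * norm w)"
proof -
  define d where "d = sigma_min X - e * sigma_max X"
  have dp: "d > 0" using hs d_def by simp
  define Xt where "Xt = X + E"
  have low: "d * norm v \<le> norm (transpose Xt *v v)" for v
  proof -
    have "transpose Xt *v v = transpose X *v v + transpose E *v v"
      unfolding Xt_def transpose_plus by (simp add: matrix_vector_mult_add_rdistrib)
    then have "norm (transpose Xt *v v) \<ge> norm (transpose X *v v) - norm (transpose E *v v)"
      by (metis norm_diff_ineq norm_minus_cancel diff_minus_eq_add)
    moreover have "norm (transpose E *v v) \<le> e * sigma_max X * norm v"
      using normE[of E v] hE by (meson mult_right_mono norm_ge_zero order_trans)
    ultimately show ?thesis using normT_lower[of X v] unfolding d_def by (simp add: algebra_simps)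
  qed
  define G where "G = Xt ** transpose Xt"
  have Gq: "(G *v u) \<bullet> u = (transpose Xt *v u) \<bullet> (transpose Xt *v u)" for u
    unfolding G_def by (simp only: matrix_vector_mul_assoc[symmetric] adj)
  have "\<forall>u. G *v u = 0 \<longrightarrow> u = 0"
  proof (intro allI impI)
    fix u assume "G *v u = 0"
    then have "norm (transpose Xt *v u) = 0" using Gq[of u] by simp
    then have "d * norm u \<le> 0" using low[of u] by simp
    then show "u = 0" using dp by (simp add: mult_le_0_iff)
  qed
  then obtain B where "B ** G = mat 1" using matrix_left_invertible_ker[of G] by blast
  then have GB: "G ** B = mat 1" using matrix_left_right_inverse by blast
  define M where "M = transpose Xt ** (B ** X)"
  have eq: "Xt *v (M *v w) = X *v w" for w
  proof -
    have "Xt ** M = X" unfolding M_def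
      by (simp only: matrix_mul_assoc G_def[symmetric]) (simp add: GB)
    then show ?thesis by (simp add: matrix_vector_mul_assoc)
  qed
  have nb: "norm (M *v w) \<le> sigma_max X / d * norm w" for w
  proof -
    define u where "u = B *v (X *v w)"
    have Mw: "M *v w = transpose Xt *v u" unfolding M_def u_def by (simp only: matrix_vector_mul_assoc)
    have Gu: "G *v u = X *v w" unfolding u_def by (simp only: matrix_vector_mul_assoc[of G B "X *v w"] GB matrix_vector_mul_lid)
    define r where "r = norm (transpose Xt *v u)"
    have r0: "0 \<le> r" unfolding r_def by simp
    have nu: "norm u \<le> r / d" using low[of u] dp unfolding r_def by (simp add: pos_le_divide_eq mult.commute)
    have "r^2 = (X *v w) \<bullet> u" unfolding r_def power2_norm_eq_inner Gq[symmetric] Gu ..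
    also have "\<dots> \<le> norm (X *v w) * norm u" by (rule norm_cauchy_schwarz)
    also have "norm (X *v w) * norm u \<le> norm (X *v w) * (r / d)" using nu by (intro mult_left_mono) auto
    also have "norm (X *v w) * (r / d) = (norm (X *v w) / d) * r" by simp
    finally have r2: "r^2 \<le> (norm (X *v w) / d) * r" .
    have "r \<le> norm (X *v w) / d" using sq_le[OF _ r2 r0] dp by simp
    also have "\<dots> \<le> sigma_max X * norm w / d" using normX[of X w] dp by (simp add: divide_right_mono)
    finally show ?thesis unfolding Mw r_def by simp
  qed
  show ?thesis using eq nb unfolding Xt_def d_def by blast
qed



lemma row_bound:
  fixes M :: "real^'n^'n"
  assumes "\<And>w. norm (M *v w) \<le> K * norm w" "0 \<le> K"
  shows "(\<Sum>j\<in>UNIV. (M$i$j)^2) \<le> K^2"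
proof -
  define a where "a = M$i"
  have comp: "(M *v x)$i = a \<bullet> x" for x
    unfolding a_def by (simp add: matrix_vector_mult_def inner_vec_def)
  have "(norm a)^2 = (M *v a)$i" by (simp add: comp power2_norm_eq_inner)
  also have "\<dots> \<le> norm (M *v a)" using component_le_norm_cart[of "M *v a" i] by simp
  also have "\<dots> \<le> K * norm a" by (rule assms(1))
  finally have h: "(norm a)^2 \<le> K * norm a" .
  have "norm a \<le> K" using sq_le[OF assms(2) h norm_ge_zero] .
  then have "(norm a)^2 \<le> K^2" by (simp add: power_mono)
  moreover have "(norm a)^2 = (\<Sum>j\<in>UNIV. (M$i$j)^2)"
  proof -
    have "(norm a)^2 = a \<bullet> a" by (rule power2_norm_eq_inner)
    also have "\<dots> = (\<Sum>j\<in>UNIV. (M$i$j)^2)" by (simp add: inner_vec_def a_def power2_eq_square)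
    finally show ?thesis .
  qed
  ultimately show ?thesis by simp
qed

lemma meas_le: 
  fixes a :: "'n::finite \<Rightarrow> real"
  assumes "(\<Sum>j\<in>UNIV. (a j)^2) \<le> K^2" "0 \<le> K" "0 \<le> t"
  shows "measure (gauss_vec::('n \<Rightarrow> real) measure) {w. (\<Sum>j\<in>UNIV. a j * w j) > K*t} \<le> exp (- (t^2) / 2)"
proof -
  interpret prob_space "gauss_vec::('n \<Rightarrow> real) measure" by (rule ps)
  have "ennreal (measure gauss_vec {w. (\<Sum>j\<in>UNIV. a j * w j) > K*t}) \<le> ennreal (exp (- (t^2) / 2))"
    using chernoff[OF assms] by (simp add: emeasure_eq_measure)
  then show ?thesis by (simp add: ennreal_le_iff)
qed

lemma sets_lin:
  fixes a :: "'n::finite \<Rightarrow> real"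
  shows "{w. (\<Sum>j\<in>UNIV. a j * w j) > c} \<in> sets (gauss_vec::('n \<Rightarrow> real) measure)"
proof -
  have "{w. (\<Sum>j\<in>UNIV. a j * w j) > c} = {w \<in> space (gauss_vec::('n \<Rightarrow> real) measure). (\<Sum>j\<in>UNIV. a j * w j) > c}"
    by (simp add: space_gv)
  also have "\<dots> \<in> sets gauss_vec" by measurable
  finally show ?thesis .
qed

theorem mainTheorem9:
  fixes X E :: "real^'n::finite^'m::finite"
    and p :: nat and \<epsilon> :: real
  assumes "rank X = CARD('m)"
    and "CARD('m) < CARD('n)"
    and "p \<ge> 2"
    and "0 < \<epsilon>" and "\<epsilon> < 1"
    and "spec_norm E \<le> \<epsilon> * sigma_max X"
    and "\<epsilon> * sigma_max X < sigma_min X"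
  shows "\<exists>A \<in> sets gauss_vec.
           measure gauss_vec A \<ge> 1 - 2 / real (CARD('n)) ^ (p - 1) \<and>
           (\<forall>w \<in> A. \<forall>wt :: real^'n.
              ((X + E) *v wt = X *v vec_lambda w \<and>
               (\<forall>z. (X + E) *v z = X *v vec_lambda w \<longrightarrow> linf_norm wt \<le> linf_norm z))
              \<longrightarrow> linf_norm wt \<le> sigma_max X / (sigma_min X - \<epsilon> * sigma_max X)
                                    * sqrt (2 * real p * ln (real CARD('n))))"
proof -
  define N where "N = real CARD('n)"
  have "0 < CARD('m)" by (simp add: card_gt_0_iff)
  then have "2 \<le> CARD('n)" using assms(2) by linarith
  then have N2: "N \<ge> 2" unfolding N_def by simp
  define K where "K = sigma_max X / (sigma_min X - \<epsilon> * sigma_max X)"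
  define t where "t = sqrt (2 * real p * ln N)"
  have K0: "0 \<le> K" unfolding K_def using sigma_max_nonneg[of X] assms(7) by simp
  have lnN: "0 \<le> ln N" using N2 by simp
  have t0: "0 \<le> t" unfolding t_def using lnN by simp
  have t2: "t^2 = 2 * real p * ln N" unfolding t_def using lnN by simp
  obtain M :: "real^'n^'n" where Meq: "\<And>w. (X + E) *v (M *v w) = X *v w"
    and Mn: "\<And>w. norm (M *v w) \<le> K * norm w"
    using construct[OF assms(6,7)] unfolding K_def by blast
  have rows: "(\<Sum>j\<in>UNIV. (M$i$j)^2) \<le> K^2" for i using row_bound[OF Mn K0] .
  have rowsm: "(\<Sum>j\<in>UNIV. (- M$i$j)^2) \<le> K^2" for i using rows[of i] by simp
  define Bp where "Bp i = {w::'n \<Rightarrow> real. (\<Sum>j\<in>UNIV. M$i$j * w j) > K*t}" for i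
  define Bm where "Bm i = {w::'n \<Rightarrow> real. (\<Sum>j\<in>UNIV. (- M$i$j) * w j) > K*t}" for i
  define U where "U = (\<Union>i. Bp i \<union> Bm i)"
  define A where "A = UNIV - U"
  interpret P: prob_space "gauss_vec::('n \<Rightarrow> real) measure" by (rule ps)
  have Bps: "Bp i \<in> sets gauss_vec" for i unfolding Bp_def by (rule sets_lin)
  have Bms: "Bm i \<in> sets gauss_vec" for i unfolding Bm_def by (rule sets_lin)
  have Us: "U \<in> sets gauss_vec" unfolding U_def using Bps Bms by auto
  have As: "A \<in> sets gauss_vec"
  proof -
    have "A = space gauss_vec - U" unfolding A_def using space_gv[where 'n='n] by simp
    then show ?thesis using sets.Diff[OF sets.top Us] by simp
  qed
  have e: "exp (- (t^2) / 2) = 1 / N ^ p"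
  proof -
    have "- (t^2) / 2 = - (real p * ln N)" using t2 by simp
    moreover have "exp (real p * ln N) = N ^ p" using N2 by (simp add: exp_of_nat_mult)
    ultimately show ?thesis by (simp add: exp_minus field_simps)
  qed
  have "measure gauss_vec U \<le> (\<Sum>i\<in>UNIV. measure gauss_vec (Bp i \<union> Bm i))"
    unfolding U_def using Bps Bms by (intro P.finite_measure_subadditive_finite) auto
  also have "\<dots> \<le> (\<Sum>i\<in>(UNIV::'n set). 2 * exp (- (t^2) / 2))"
  proof (intro sum_mono)
    fix i
    have "measure gauss_vec (Bp i \<union> Bm i) \<le> measure gauss_vec (Bp i) + measure gauss_vec (Bm i)"
      using Bps Bms by (intro measure_Un_le) auto
    also have "\<dots> \<le> exp (- (t^2) / 2) + exp (- (t^2) / 2)"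
      unfolding Bp_def Bm_def
      by (intro add_mono meas_le rows rowsm K0 t0)
    finally show "measure gauss_vec (Bp i \<union> Bm i) \<le> 2 * exp (- (t^2) / 2)" by simp
  qed
  also have "\<dots> = 2 * N / N ^ p" unfolding e N_def by simp
  also have "\<dots> = 2 / N ^ (p - 1)"
  proof -
    have "N ^ p = N * N ^ (p - 1)" using assms(3) by (metis Suc_diff_1 not_numeral_le_zero neq0_conv power_Suc zero_less_numeral order_less_le_trans)
    then show ?thesis using N2 by simp
  qed
  finally have mU: "measure gauss_vec U \<le> 2 / N ^ (p - 1)" .
  have mA: "measure gauss_vec A = 1 - measure gauss_vec U"
    unfolding A_def using P.prob_compl[OF Us] space_gv[where 'n='n] by simp
  have good: "linf_norm wt \<le> K * t"
    if wA: "w \<in> A" and feas: "(X + E) *v wt = X *v vec_lambda w \<and>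
               (\<forall>z. (X + E) *v z = X *v vec_lambda w \<longrightarrow> linf_norm wt \<le> linf_norm z)" for w wt
  proof -
    define z where "z = M *v vec_lambda w"
    have "linf_norm wt \<le> linf_norm z" using feas Meq unfolding z_def by blast
    also have "linf_norm z \<le> K * t"
      unfolding linf_norm_def
    proof (subst Max_le_iff, simp, simp, intro ballI)
      fix y assume "y \<in> range (\<lambda>i. \<bar>z $ i\<bar>)"
      then obtain i where y: "y = \<bar>z $ i\<bar>" by auto
      have zi: "z $ i = (\<Sum>j\<in>UNIV. M$i$j * w j)" unfolding z_def by (simp add: matrix_vector_mult_def)
      have "w \<notin> Bp i" "w \<notin> Bm i" using wA unfolding A_def U_def by auto
      then have "(\<Sum>j\<in>UNIV. M$i$j * w j) \<le> K*t" "- (\<Sum>j\<in>UNIV. M$i$j * w j) \<le> K*t"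
        unfolding Bp_def Bm_def by (auto simp: sum_negf[symmetric])
      then show "y \<le> K * t" unfolding y zi by linarith
    qed
    finally show ?thesis .
  qed
  show ?thesis
    apply (rule bexI[OF _ As])
    using mA mU good unfolding N_def K_def t_def by auto
qed


end
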